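(* Let $(X,Y)$ be a conditionally dependent (CD) random vector with function $s$. Then $s$ is bounded on $D_Y$: there exists $C>0$ such that $s(y)\le C$ for all $y\in D_Y$.
   Context: $X$ is real-valued with distribution $F$ such that $\overline F(x)=1-F(x)>0$ for all $x\in\mathbb{R}$, and $Y$ takes values in $(0,\infty)$ with distribution $G$. Let $D_Y=\{y\in(0,\infty):\mathrm P(Y\in(y-\delta,y+\delta))>0\ \forall\delta>0\}$. For $x\in\mathbb{R}$ and $y\in D_Y$, $\mathrm P(X>x\mid Y=y)=\lim_{t\downarrow0}\mathrm P(X>x,Y\in[y,y+t))/\mathrm P(Y\in[y,y+t))$ when this limit exists. $(X,Y)$ is conditionally dependent (CD) with function $s$ if $s$ is a positive measurable function on $[0,\infty)$ such that these conditional tails exist and $\lim_{x\to\infty}\sup_{y\in D_Y}|\mathrm P(X>x\mid Y=y)/(\overline F(x)s(y))-1|=0$. *)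

theory Defs
  imports "HOL-Probability.Probability"
begin

definition Fbar :: "'a measure \<Rightarrow> ('a \<Rightarrow> real) \<Rightarrow> real \<Rightarrow> real" where
  "Fbar M X x = measure M {\<omega> \<in> space M. X \<omega> > x}"

definition D_Y :: "'a measure \<Rightarrow> ('a \<Rightarrow> real) \<Rightarrow> real set" where
  "D_Y M Y = {y. 0 < y \<and> (\<forall>\<delta>>0. measure M {\<omega> \<in> space M. Y \<omega> \<in> {y - \<delta> <..< y + \<delta>}} > 0)}"

definition cond_ratio :: "'a measure \<Rightarrow> ('a \<Rightarrow> real) \<Rightarrow> ('a \<Rightarrow> real) \<Rightarrow> real \<Rightarrow> real \<Rightarrow> real \<Rightarrow> real" where
  "cond_ratio M X Y x y t =
     measure M {\<omega> \<in> space M. X \<omega> > x \<and> Y \<omega> \<in> {y ..< y + t}}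
     / measure M {\<omega> \<in> space M. Y \<omega> \<in> {y ..< y + t}}"

definition cond_tail_exists :: "'a measure \<Rightarrow> ('a \<Rightarrow> real) \<Rightarrow> ('a \<Rightarrow> real) \<Rightarrow> real \<Rightarrow> real \<Rightarrow> bool" where
  "cond_tail_exists M X Y x y \<longleftrightarrow>
     (\<forall>\<^sub>F t in at_right 0. measure M {\<omega> \<in> space M. Y \<omega> \<in> {y ..< y + t}} > 0) \<and>
     (\<exists>L. (cond_ratio M X Y x y \<longlongrightarrow> L) (at_right 0))"

definition cond_tail :: "'a measure \<Rightarrow> ('a \<Rightarrow> real) \<Rightarrow> ('a \<Rightarrow> real) \<Rightarrow> real \<Rightarrow> real \<Rightarrow> real" where
  "cond_tail M X Y x y = Lim (at_right 0) (cond_ratio M X Y x y)"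

text \<open>(X,Y) is conditionally dependent with function s. The uniform convergence
  sup over D_Y of |...-1| tending to 0 as x tends to infinity is written out with epsilons.\<close>
definition CD :: "'a measure \<Rightarrow> ('a \<Rightarrow> real) \<Rightarrow> ('a \<Rightarrow> real) \<Rightarrow> (real \<Rightarrow> real) \<Rightarrow> bool" where
  "CD M X Y s \<longleftrightarrow>
     s \<in> borel_measurable (restrict_space borel {0..}) \<and> (\<forall>y\<ge>0. s y > 0) \<and>
     (\<forall>x. \<forall>y\<in>D_Y M Y. cond_tail_exists M X Y x y) \<and>
     (\<forall>\<epsilon>>0. \<exists>x0. \<forall>x\<ge>x0. \<forall>y\<in>D_Y M Y.
        \<bar>cond_tail M X Y x y / (Fbar M X x * s y) - 1\<bar> \<le> \<epsilon>)"

end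

theory Submission
  imports Defs
begin

lemma cond_ratio_le1:
  assumes "prob_space M" "Y \<in> borel_measurable M"
  shows "cond_ratio M X Y x y t \<le> 1"
proof -
  interpret prob_space M by fact
  let ?A = "{\<omega> \<in> space M. X \<omega> > x \<and> Y \<omega> \<in> {y ..< y + t}}"
  let ?B = "{\<omega> \<in> space M. Y \<omega> \<in> {y ..< y + t}}"
  have B: "?B \<in> sets M" using assms(2) by measurable
  have "measure M ?A \<le> measure M ?B"
    by (rule finite_measure_mono) (use B in auto)
  then show ?thesis unfolding cond_ratio_def
    by (cases "measure M ?B = 0") (auto simp: divide_le_eq_1 order.strict_iff_order)
qed

lemma cond_tail_le1:
  assumes "prob_space M" "Y \<in> borel_measurable M" "cond_tail_exists M X Y x y"
  shows "cond_tail M X Y x y \<le> 1"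
proof -
  obtain L where L: "(cond_ratio M X Y x y \<longlongrightarrow> L) (at_right 0)"
    using assms(3) unfolding cond_tail_exists_def by blast
  have "cond_tail M X Y x y = L" unfolding cond_tail_def using L by (simp add: tendsto_Lim)
  moreover have "L \<le> 1"
    by (rule tendsto_upperbound[OF L]) (auto intro: always_eventually cond_ratio_le1[OF assms(1,2)])
  ultimately show ?thesis by simp
qed

theorem proposition2p4:
  fixes M :: "'a measure" and X Y :: "'a \<Rightarrow> real" and s :: "real \<Rightarrow> real"
  assumes "prob_space M"
    and "X \<in> borel_measurable M" and "Y \<in> borel_measurable M"
    and "\<And>\<omega>. \<omega> \<in> space M \<Longrightarrow> Y \<omega> > 0"
    and "\<And>x. Fbar M X x > 0"
    and "CD M X Y s"
  shows "\<exists>C>0. \<forall>y\<in>D_Y M Y. s y \<le> C"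
proof -
  have spos: "\<And>y. y \<ge> 0 \<Longrightarrow> s y > 0" and ex: "\<And>x y. y \<in> D_Y M Y \<Longrightarrow> cond_tail_exists M X Y x y"
    using assms(6) unfolding CD_def by auto
  obtain x0 where x0: "\<And>y. y \<in> D_Y M Y \<Longrightarrow>
      \<bar>cond_tail M X Y x0 y / (Fbar M X x0 * s y) - 1\<bar> \<le> 1/2"
    using assms(6) unfolding CD_def by (metis order_refl less_divide_eq_1_pos zero_less_one one_less_numeral_iff semiring_norm(76) divide_pos_pos zero_less_numeral)
  define F where "F = Fbar M X x0"
  have F: "F > 0" using assms(5) F_def by simp
  show ?thesis
  proof (intro exI[of _ "2 / F"] conjI ballI)
    show "0 < 2 / F" using F by simp
    fix y assume y: "y \<in> D_Y M Y"
    have sy: "s y > 0" using y spos unfolding D_Y_def by auto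
    have le1: "cond_tail M X Y x0 y \<le> 1" using cond_tail_le1[OF assms(1,3) ex[OF y]] .
    have "cond_tail M X Y x0 y / (F * s y) \<ge> 1/2" using x0[OF y] unfolding F_def abs_le_iff by linarith
    hence "cond_tail M X Y x0 y \<ge> F * s y / 2" using F sy by (simp add: field_simps)
    hence "F * s y \<le> 2" using le1 by linarith
    thus "s y \<le> 2 / F" using F by (simp add: field_simps)
  qed
qed

end
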